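(* For integers $N\ge 3$ and $\Omega\in[-\pi,\pi)$ with $\Omega \notin \{0, 2\pi/N\}$, define $$Z(\Omega) = \frac{|\sin(N\Omega/2)|}{N}\left|\frac{1}{\sin(\Omega/2)} - \frac{1}{\sin(\Omega/2 - \pi/N)}\right| .$$ Let $\Omega$ be uniformly distributed on $[-\pi,\pi)\setminus[-0.5\pi/N,\,2.5\pi/N]$. Then there exist constants $C>0$ and $N_0$ (independent of $N$) such that $\mathbb E[Z(\Omega)^2] \le C/N$ for all $N \ge N_0$.
   Context: The quantity $Z(\Omega)$ is the magnitude of the output of a fixed two-tap correlator applied to the responses $[D_N(\Omega), D_N(\Omega-2\pi/N)]$ of an interferer at spatial frequency $\Omega$ in two adjacent DFT bins, where $D_N(\omega)=\frac1N\sum_{k=0}^{N-1}e^{j\omega k}$. *)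

theory Defs
  imports "HOL-Analysis.Analysis"
begin

definition Zfun :: "nat \<Rightarrow> real \<Rightarrow> real" where
  "Zfun N \<Omega> = \<bar>sin (real N * \<Omega> / 2)\<bar> / real N *
      \<bar>1 / sin (\<Omega> / 2) - 1 / sin (\<Omega> / 2 - pi / real N)\<bar>"

definition OmegaSet :: "nat \<Rightarrow> real set" where
  "OmegaSet N = {-pi..<pi} - {-(1/2) * pi / real N .. (5/2) * pi / real N}"

definition EZ2 :: "nat \<Rightarrow> real" where
  "EZ2 N = (LINT \<Omega>:OmegaSet N|lborel. (Zfun N \<Omega>)^2) / measure lborel (OmegaSet N)"

end

theory Submission
  imports Defs
begin

lemma sin_lb_half:
  fixes y :: real assumes "0 \<le> y" "y \<le> pi/2"
  shows "y/2 \<le> sin y"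
proof -
  have "\<bar>sin y - (\<Sum>m<3. sin_coeff m * y ^ m)\<bar> \<le> inverse (fact 3) * \<bar>y\<bar> ^ 3"
    by (rule Maclaurin_sin_bound)
  then have h: "\<bar>sin y - y\<bar> \<le> y^3/6"
  proof -
    have e1: "(\<Sum>m<3. sin_coeff m * y ^ m) = y"
      by (simp add: lessThan_nat_numeral sin_coeff_def)
    have e2: "inverse (fact 3) * \<bar>y\<bar> ^ 3 = y^3/6"
      using assms by (simp add: fact_numeral)
    show ?thesis using \<open>\<bar>sin y - (\<Sum>m<3. sin_coeff m * y ^ m)\<bar> \<le> inverse (fact 3) * \<bar>y\<bar> ^ 3\<close>
      unfolding e1 e2 .
  qed
  have "pi \<le> 3.2" using pi_approx(2) by simp
  have "y \<le> 1.6" using assms \<open>pi \<le> 3.2\<close> by linarith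
  have "y^2 \<le> 1.6^2" using assms \<open>y \<le> 1.6\<close> by (intro power_mono) auto
  then have "y^2 \<le> 3" by (simp add: power_divide)
  then have "y * y^2 \<le> y * 3" using assms by (intro mult_left_mono) auto
  then have "y^3/6 \<le> y/2" by (simp add: power3_eq_cube power2_eq_square)
  then show ?thesis using h by linarith
qed

lemma sin_lb_sixth:
  fixes y :: real assumes "\<bar>y\<bar> \<le> 5*pi/6"
  shows "\<bar>y\<bar>/6 \<le> \<bar>sin y\<bar>"
proof -
  have key: "z/6 \<le> sin z" if "0 \<le> z" "z \<le> 5*pi/6" for z :: real
  proof (cases "z \<le> pi/2")
    case True then show ?thesis using sin_lb_half[of z] that by linarith
  next
    case False
    have "sin (pi/6) \<le> sin (pi - z)"
      using False that by (intro sin_monotone_2pi_le) auto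
    then have "1/2 \<le> sin z" by (simp add: sin_30)
    moreover have "pi \<le> 3.2" using pi_approx(2) by simp
    then have "z/6 \<le> 1/2" using that by linarith
    ultimately show ?thesis by linarith
  qed
  show ?thesis
  proof (cases "0 \<le> y")
    case True then show ?thesis using key[of y] assms by auto
  next
    case False then show ?thesis using key[of "-y"] assms by auto
  qed
qed

lemma sin_lip: "\<bar>sin (x::real) - sin y\<bar> \<le> \<bar>x - y\<bar>"
proof -
  have "\<bar>sin x - sin y\<bar> = 2 * \<bar>sin ((x - y) / 2)\<bar> * \<bar>cos ((x + y) / 2)\<bar>"
    by (simp add: sin_diff_sin abs_mult)
  also have "\<dots> \<le> 2 * \<bar>(x - y) / 2\<bar> * 1"
    by (intro mult_mono abs_sin_x_le_abs_x) auto
  finally show ?thesis by simp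
qed

lemma Z_bound:
  assumes N: "N \<ge> 3" and om: "\<Omega> \<in> OmegaSet N"
  shows "Zfun N \<Omega> \<le> 720 * pi / (real N ^ 2 * \<Omega> ^ 2)"
proof -
  define p where "p = pi / real N"
  have Npos: "real N \<ge> 3" using N by simp
  have p0: "0 < p" using Npos by (simp add: p_def)
  have p3: "p \<le> pi/3" unfolding p_def using Npos pi_gt_zero
    by (simp add: divide_simps)
  have r1: "- (1/2) * pi / real N = - (p/2)" by (simp add: p_def)
  have r2: "(5/2) * pi / real N = 5*p/2" by (simp add: p_def)
  have m: "-pi \<le> \<Omega>" "\<Omega> < pi" "\<Omega> < -(p/2) \<or> \<Omega> > 5*p/2"
    using om unfolding OmegaSet_def r1 r2 by auto
  define a where "a = \<Omega>/2"
  define b where "b = \<Omega>/2 - p"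
  have Om0: "\<Omega> \<noteq> 0" using m p0 by auto
  have ha: "\<bar>a\<bar> \<le> pi/2" using m unfolding a_def by auto
  have hb1: "\<bar>b\<bar> \<le> 5*pi/6" using m p0 p3 unfolding b_def by auto
  have hb2: "\<bar>\<Omega>\<bar>/10 \<le> \<bar>b\<bar>" using m p0 unfolding b_def by auto
  have sa: "\<bar>\<Omega>\<bar>/12 \<le> \<bar>sin a\<bar>"
    using sin_lb_sixth[of a] ha pi_gt_zero unfolding a_def by auto
  have sb: "\<bar>\<Omega>\<bar>/60 \<le> \<bar>sin b\<bar>"
    using sin_lb_sixth[of b] hb1 hb2 by auto
  have Opos: "0 < \<bar>\<Omega>\<bar>" using Om0 by simp
  have sa0: "sin a \<noteq> 0" using sa Opos by auto
  have sb0: "sin b \<noteq> 0" using sb Opos by auto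
  have "\<bar>1 / sin a - 1 / sin b\<bar> = \<bar>sin b - sin a\<bar> / (\<bar>sin a\<bar> * \<bar>sin b\<bar>)"
  proof -
    have "1 / sin a - 1 / sin b = (sin b - sin a) / (sin a * sin b)"
      using sa0 sb0 by (simp add: field_simps)
    then show ?thesis by (simp add: abs_mult)
  qed
  also have "\<dots> \<le> p / (\<bar>sin a\<bar> * \<bar>sin b\<bar>)"
    using sin_lip[of b a] sa0 sb0 p0 by (intro divide_right_mono) (auto simp: a_def b_def)
  also have "\<dots> \<le> p / ((\<bar>\<Omega>\<bar>/12) * (\<bar>\<Omega>\<bar>/60))"
    using sa sb Opos p0 by (intro divide_left_mono mult_mono mult_pos_pos) auto
  also have "\<dots> = 720 * p / \<Omega>^2" by (simp add: power2_eq_square field_simps)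
  finally have D: "\<bar>1 / sin a - 1 / sin b\<bar> \<le> 720 * p / \<Omega>^2" .
  have "Zfun N \<Omega> = \<bar>sin (real N * \<Omega> / 2)\<bar> / real N * \<bar>1 / sin a - 1 / sin b\<bar>"
    by (simp add: Zfun_def a_def b_def p_def)
  also have "\<dots> \<le> 1 / real N * (720 * p / \<Omega>^2)"
    using Npos D by (intro mult_mono divide_right_mono) auto
  also have "\<dots> = 720 * pi / (real N ^ 2 * \<Omega> ^ 2)"
    by (simp add: p_def power2_eq_square field_simps)
  finally show ?thesis .
qed

lemma inv4_int_gen:
  assumes "c \<le> d" "0 \<notin> {c..d}"
  shows "set_integrable lborel {c..d} (\<lambda>x::real. 1/x^4)"
    "integral\<^sup>L lborel (\<lambda>x. indicator {c..d} x *\<^sub>R (1/x^4)) = (-1/(3*d^3)) - (-1/(3*c^3))"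
proof -
  have cont: "continuous_on {c..d} (\<lambda>x::real. 1/x^4)"
    using assms by (intro continuous_intros) auto
  show "set_integrable lborel {c..d} (\<lambda>x::real. 1/x^4)"
    by (rule borel_integrable_atLeastAtMost'[OF cont])
  show "integral\<^sup>L lborel (\<lambda>x. indicator {c..d} x *\<^sub>R (1/x^4)) = (-1/(3*d^3)) - (-1/(3*c^3))"
  proof (rule integral_FTC_atLeastAtMost[OF assms(1) _ cont])
    fix x :: real assume x: "c \<le> x" "x \<le> d"
    then have x0: "x \<noteq> 0" using assms by auto
    have "((\<lambda>x. -1/(3*x^3)) has_real_derivative 1/x^4) (at x)"
      apply (rule derivative_eq_intros refl)+
      using x0 apply (simp_all add: field_simps eval_nat_numeral)
      done
    then show "((\<lambda>x. -1/(3*x^3)) has_vector_derivative 1/x^4) (at x within {c..d})"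
      by (simp add: has_real_derivative_iff_has_vector_derivative has_vector_derivative_at_within)
  qed
qed

theorem mainTheorem7:
  shows "\<exists>C::real. C > 0 \<and> (\<exists>N0::nat. \<forall>N::nat. N \<ge> 3 \<and> N \<ge> N0 \<longrightarrow>
           set_integrable lborel (OmegaSet N) (\<lambda>\<Omega>. (Zfun N \<Omega>)^2) \<and>
           EZ2 N \<le> C / real N)"
proof (intro exI conjI allI impI)
  show "(0::real) < 32 * 720^2 / (3 * pi^2)" by simp
  fix N :: nat assume "3 \<le> N \<and> 3 \<le> N"
  then have N: "N \<ge> 3" by simp
  have Npos: "real N \<ge> 3" using N by simp
  define c where "c = pi / (2 * real N)"
  have c0: "0 < c" using Npos by (simp add: c_def)
  have cpi: "c \<le> pi" using Npos pi_gt_zero by (simp add: c_def field_simps)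
  define S where "S = OmegaSet N"
  define I1 where "I1 = {-pi..-c}"
  define I2 where "I2 = {c..pi}"
  define A where "A = (720 * pi)^2 / real N ^ 4"
  have A0: "0 \<le> A" by (simp add: A_def)
  have SI: "S \<subseteq> I1 \<union> I2"
  proof
    fix x assume "x \<in> S"
    then have "-pi \<le> x" "x < pi" "x < -(1/2)*pi/real N \<or> x > (5/2)*pi/real N"
      by (auto simp: S_def OmegaSet_def)
    moreover have "-(1/2)*pi/real N = -c" "(5/2)*pi/real N \<ge> c"
      using Npos pi_gt_zero by (auto simp: c_def field_simps)
    ultimately show "x \<in> I1 \<union> I2" by (auto simp: I1_def I2_def)
  qed
  have i1: "set_integrable lborel I1 (\<lambda>x::real. 1/x^4)"
    "integral\<^sup>L lborel (\<lambda>x. indicator I1 x *\<^sub>R (1/x^4)) = (-1/(3*(-c)^3)) - (-1/(3*(-pi)^3))"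
    unfolding I1_def using inv4_int_gen[of "-pi" "-c"] c0 cpi by auto
  have i2: "set_integrable lborel I2 (\<lambda>x::real. 1/x^4)"
    "integral\<^sup>L lborel (\<lambda>x. indicator I2 x *\<^sub>R (1/x^4)) = (-1/(3*pi^3)) - (-1/(3*c^3))"
    unfolding I2_def using inv4_int_gen[of c pi] c0 cpi by auto
  define h where "h x = A * (indicator I1 x *\<^sub>R (1/x^4) + indicator I2 x *\<^sub>R (1/x^4))" for x :: real
  have hint: "integrable lborel h"
    unfolding h_def using i1(1) i2(1) unfolding set_integrable_def by auto
  have hval: "integral\<^sup>L lborel h = A * ((-1/(3*(-c)^3)) - (-1/(3*(-pi)^3)) + ((-1/(3*pi^3)) - (-1/(3*c^3))))"
    unfolding h_def using i1 i2 unfolding set_integrable_def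
    by (simp add: Bochner_Integration.integral_add)
  have hle: "integral\<^sup>L lborel h \<le> A * (2 / (3 * c^3))"
    unfolding hval
  proof (intro mult_left_mono A0)
    have "(-1/(3*(-c)^3)) - (-1/(3*(-pi)^3)) + ((-1/(3*pi^3)) - (-1/(3*c^3))) = 2/(3*c^3) - 2/(3*pi^3)"
      by (simp add: power_minus_odd)
    also have "\<dots> \<le> 2/(3*c^3)" using pi_gt_zero by simp
    finally show "(-1/(3*(-c)^3)) - (-1/(3*(-pi)^3)) + ((-1/(3*pi^3)) - (-1/(3*c^3))) \<le> 2/(3*c^3)" .
  qed
  define f where "f x = indicator S x *\<^sub>R (Zfun N x)^2" for x :: real
  have Smeas: "S \<in> sets lborel" by (simp add: S_def OmegaSet_def)
  have fmeas: "f \<in> borel_measurable lborel"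
    unfolding f_def[abs_def] Zfun_def S_def OmegaSet_def by measurable
  have fb: "\<bar>f x\<bar> \<le> h x" for x
  proof (cases "x \<in> S")
    case True
    then have x0: "x \<noteq> 0" using SI c0 by (auto simp: I1_def I2_def)
    have Z0: "0 \<le> Zfun N x" by (simp add: Zfun_def)
    have "(Zfun N x)^2 \<le> (720 * pi / (real N ^ 2 * x ^ 2))^2"
      using Z_bound[OF N True[unfolded S_def]] Z0 by (intro power_mono) auto
    also have "\<dots> = A * (1/x^4)"
    proof -
      have "(720 * pi / (real N ^ 2 * x ^ 2))^2 = (720 * pi)^2 / ((real N ^ 2)^2 * (x ^ 2)^2)"
        by (simp only: power_divide power_mult_distrib)
      also have "(real N ^ 2)^2 = real N ^ 4" by (simp flip: power_mult)
      also have "(x ^ 2)^2 = x ^ 4" by (simp flip: power_mult)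
      finally show ?thesis by (simp add: A_def)
    qed
    also have "\<dots> \<le> h x"
      unfolding h_def
    proof (intro mult_left_mono A0)
      have xI: "x \<in> I1 \<union> I2" using True SI by blast
      show "1/x^4 \<le> indicator I1 x *\<^sub>R (1/x^4) + indicator I2 x *\<^sub>R (1/x^4)"
      proof (cases "x \<in> I1")
        case True then show ?thesis by (simp add: indicator_def)
      next
        case False then have "x \<in> I2" using xI by blast
        then show ?thesis using False by (simp add: indicator_def)
      qed
    qed
    finally show ?thesis using True by (simp add: f_def)
  next
    case False
    then show ?thesis using A0 by (simp add: f_def h_def indicator_def)
  qed
  have fint: "integrable lborel f"
  proof -
    have "AE x in lborel. norm (f x) \<le> norm (h x)"
    proof (intro AE_I2)
      fix x
      have "\<bar>f x\<bar> \<le> h x" by (rule fb)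
      moreover have "h x \<le> \<bar>h x\<bar>" by (rule abs_ge_self)
      ultimately show "norm (f x) \<le> norm (h x)" unfolding real_norm_def by (rule order_trans)
    qed
    then show ?thesis by (rule Bochner_Integration.integrable_bound[OF hint fmeas])
  qed
  show "set_integrable lborel (OmegaSet N) (\<lambda>\<Omega>. (Zfun N \<Omega>)^2)"
    using fint unfolding set_integrable_def f_def S_def .
  have fle: "integral\<^sup>L lborel f \<le> A * (2 / (3 * c^3))"
  proof -
    have "integral\<^sup>L lborel f \<le> integral\<^sup>L lborel h"
      by (intro integral_mono[OF fint hint]) (rule abs_le_D1[OF fb])
    then show ?thesis using hle by linarith
  qed
  have f0: "0 \<le> integral\<^sup>L lborel f"
    by (rule Bochner_Integration.integral_nonneg) (simp add: f_def)
  have bnd: "A * (2 / (3 * c^3)) = 720^2 * 16 / (3 * pi * real N)"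
    unfolding A_def c_def using Npos pi_gt_zero by (simp add: field_simps power_mult_distrib eval_nat_numeral)
  have fmS: "S \<in> fmeasurable lborel"
  proof -
    have "{-pi..<pi} \<in> fmeasurable lborel" by (intro fmeasurableI) auto
    then show ?thesis unfolding S_def OmegaSet_def by (rule fmeasurable_Diff) simp
  qed
  have sub: "{-pi..<-pi/2} \<subseteq> S"
  proof
    fix x assume "x \<in> {-pi..<-pi/2}"
    moreover have "-pi/2 \<le> -(1/2)*pi/real N" using Npos pi_gt_zero by (simp add: field_simps)
    ultimately show "x \<in> S" by (auto simp: S_def OmegaSet_def)
  qed
  have mS: "pi/2 \<le> measure lborel S"
    using measure_mono_fmeasurable[OF sub _ fmS] by simp
  have "EZ2 N = integral\<^sup>L lborel f / measure lborel S"
    unfolding EZ2_def set_lebesgue_integral_def f_def[abs_def] S_def ..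
  also have "\<dots> \<le> (720^2 * 16 / (3 * pi * real N)) / (pi/2)"
    using fle f0 mS bnd pi_gt_zero by (intro frac_le) auto
  also have "\<dots> = 32 * 720^2 / (3 * pi^2) / real N"
    by (simp add: field_simps power2_eq_square)
  finally show "EZ2 N \<le> 32 * 720^2 / (3 * pi^2) / real N" .
qed

end
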